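(* For $A\in\mathrm{SL}(2,\mathbb R)$ the following are equivalent: (1) $A\Lambda_q$ contains a vertical vector (a nonzero vector of the form $(0,y)^T$); (2) there exists $s_0>0$ with $h_{s_0}A\Lambda_q=A\Lambda_q$; (3) there exists $\tau_0>0$ with $A\Lambda_q\cap S_{\tau_0}=\emptyset$. Moreover, if $A\Lambda_q$ contains a vertical vector of length $a>0$, then the smallest $s_0>0$ with $h_{s_0}A\Lambda_q=A\Lambda_q$ is $\lambda_qa^2$.
   Context: Fix an integer $q\ge3$, let $\lambda_q=2\cos(\pi/q)$, and let $G_q\subset \mathrm{SL}(2,\mathbb R)$ be the Hecke triangle group generated by $S=\begin{pmatrix}0&-1\\1&0\end{pmatrix}$ and $T_q=\begin{pmatrix}1&\lambda_q\\0&1\end{pmatrix}$, acting linearly on $\mathbb R^2$. Set $\Lambda_q=G_q(1,0)^T$ and $A\Lambda_q=\{A\mathbf v:\mathbf v\in\Lambda_q\}$. $h_s=\begin{pmatrix}1&0\\-s&1\end{pmatrix}$ for $s\in\mathbb R$; for $\tau>0$, $S_\tau=\{(x,y)^T:0<x\le\tau\}$. *)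

theory Defs
  imports "HOL-Analysis.Analysis"
begin

definition mat2 :: "real \<Rightarrow> real \<Rightarrow> real \<Rightarrow> real \<Rightarrow> real^2^2" where
  "mat2 a b c d = vector [vector [a, b], vector [c, d]]"

definition vec2 :: "real \<Rightarrow> real \<Rightarrow> real^2" where
  "vec2 x y = vector [x, y]"

definition lambda_q :: "nat \<Rightarrow> real" where
  "lambda_q q = 2 * cos (pi / real q)"

definition S_mat :: "real^2^2" where
  "S_mat = mat2 0 (-1) 1 0"

definition T_mat :: "nat \<Rightarrow> real^2^2" where
  "T_mat q = mat2 1 (lambda_q q) 0 1"

definition h_mat :: "real \<Rightarrow> real^2^2" where
  "h_mat s = mat2 1 0 (-s) 1"

inductive_set hecke_group :: "nat \<Rightarrow> (real^2^2) set" for q :: nat where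
  hg_id: "mat 1 \<in> hecke_group q"
| hg_S: "g \<in> hecke_group q \<Longrightarrow> S_mat ** g \<in> hecke_group q"
| hg_Sinv: "g \<in> hecke_group q \<Longrightarrow> mat2 0 1 (-1) 0 ** g \<in> hecke_group q"
| hg_T: "g \<in> hecke_group q \<Longrightarrow> T_mat q ** g \<in> hecke_group q"
| hg_Tinv: "g \<in> hecke_group q \<Longrightarrow> mat2 1 (- lambda_q q) 0 1 ** g \<in> hecke_group q"

definition Lambda_q :: "nat \<Rightarrow> (real^2) set" where
  "Lambda_q q = {g *v vec2 1 0 | g. g \<in> hecke_group q}"

definition mat_image :: "real^2^2 \<Rightarrow> (real^2) set \<Rightarrow> (real^2) set" where
  "mat_image A L = (\<lambda>v. A *v v) ` L"

definition strip :: "real \<Rightarrow> (real^2) set" where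
  "strip \<tau> = {v. 0 < v$1 \<and> v$1 \<le> \<tau>}"

end

theory Submission
  imports Defs
begin


lemma vec2_nth[simp]: "vec2 x y $ 1 = x" "vec2 x y $ 2 = y"
  by (simp_all add: vec2_def)

lemma mat2_nth[simp]: "mat2 a b c d $ 1 $ 1 = a" "mat2 a b c d $ 1 $ 2 = b"
   "mat2 a b c d $ 2 $ 1 = c" "mat2 a b c d $ 2 $ 2 = d"
  by (simp_all add: mat2_def)

lemma vec2_eta: "v = vec2 (v$1) (v$2)"
  by (simp add: vec_eq_iff forall_2)

lemma vec2_eq_iff: "vec2 a b = vec2 c d \<longleftrightarrow> a = c \<and> b = d"
  by (auto simp: vec_eq_iff forall_2)

lemma mat2_eta: "M = mat2 (M$1$1) (M$1$2) (M$2$1) (M$2$2)"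
  by (simp add: vec_eq_iff forall_2)

lemma mat2_mult: "mat2 a b c d ** mat2 a' b' c' d' = mat2 (a*a'+b*c') (a*b'+b*d') (c*a'+d*c') (c*b'+d*d')"
  by (simp add: vec_eq_iff forall_2 matrix_matrix_mult_def sum_2)

lemma mat2_mulv: "mat2 a b c d *v vec2 x y = vec2 (a*x+b*y) (c*x+d*y)"
  by (simp add: vec_eq_iff forall_2 matrix_vector_mult_def sum_2)

lemma mat2_det: "det (mat2 a b c d) = a*d - b*c"
  by (simp add: det_2)

lemma mat1_mat2: "(mat 1 :: real^2^2) = mat2 1 0 0 1"
  by (simp add: vec_eq_iff forall_2 mat_def)

lemma vec2_neg: "- vec2 x y = vec2 (-x) (-y)"
  by (simp add: vec_eq_iff forall_2)



definition sn :: "nat \<Rightarrow> int \<Rightarrow> real" where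
  "sn q n = sin (real_of_int n * pi / real q) / sin (pi / real q)"

lemma sin_th_pos: "q \<ge> 3 \<Longrightarrow> sin (pi / real q) > 0"
  by (rule sin_gt_zero) (auto simp: field_simps)

lemma sn_0[simp]: "sn q 0 = 0" by (simp add: sn_def)

lemma sn_1[simp]: "q \<ge> 3 \<Longrightarrow> sn q 1 = 1" using sin_th_pos[of q] by (simp add: sn_def)

lemma sn_neg: "sn q (-n) = - sn q n" by (simp add: sn_def)

lemma sn_rec: assumes "q \<ge> 3" shows "sn q (n+1) + sn q (n-1) = lambda_q q * sn q n"
proof -
  define t where "t = pi / real q"
  define x where "x = real_of_int n * pi / real q"
  have a: "real_of_int (n+1) * pi / real q = x + t" by (simp add: x_def t_def add_divide_distrib distrib_right)
  have b: "real_of_int (n-1) * pi / real q = x - t" by (simp add: x_def t_def diff_divide_distrib left_diff_distrib)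
  have "sin (x+t) + sin (x-t) = 2 * cos t * sin x" by (simp add: sin_add sin_diff)
  then show ?thesis unfolding sn_def lambda_q_def a b
    by (simp add: t_def x_def add_divide_distrib[symmetric])
qed

lemma sn_shift: assumes "q \<ge> 3" shows "sn q (n + int q) = - sn q n"
proof -
  have "real_of_int (n + int q) * pi / real q = real_of_int n * pi / real q + pi"
    using assms by (simp add: field_simps)
  then show ?thesis by (simp add: sn_def sin_periodic_pi)
qed

lemma sn_q[simp]: "q \<ge> 3 \<Longrightarrow> sn q (int q) = 0"
  using sn_shift[of q 0] by simp
lemma sn_qp1: "q \<ge> 3 \<Longrightarrow> sn q (int q + 1) = -1"
  using sn_shift[of q 1] by (simp add: add.commute)
lemma sn_qm1: "q \<ge> 3 \<Longrightarrow> sn q (int q - 1) = 1"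
  using sn_shift[of q "-1"] by (simp add: sn_neg)

lemma sn_ge0: assumes "q \<ge> 3" "0 \<le> k" "k \<le> int q" shows "sn q k \<ge> 0"
proof -
  have "0 \<le> real_of_int k * pi / real q" using assms by simp
  moreover have "real_of_int k * pi / real q \<le> pi" using assms
    by (simp add: field_simps)
  ultimately have "sin (real_of_int k * pi / real q) \<ge> 0" by (rule sin_ge_zero)
  then show ?thesis using sin_th_pos[OF assms(1)] by (simp add: sn_def)
qed

lemma sn_ge1: assumes "q \<ge> 3" "1 \<le> k" "k \<le> int q - 1" shows "sn q k \<ge> 1"
proof -
  define t where "t = pi / real q"
  define x where "x = real_of_int k * pi / real q"
  have t0: "0 < t" "t \<le> pi/2" using assms(1) by (auto simp: t_def field_simps)
  have x1: "t \<le> x" using assms by (simp add: x_def t_def field_simps)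
  have "real_of_int k \<le> real q - 1" using assms by linarith
  then have "real_of_int k * pi \<le> (real q - 1) * pi" by (simp add: mult_right_mono)
  then have x2: "x \<le> pi - t" using assms by (simp add: x_def t_def field_simps)
  have "sin t \<le> sin x"
  proof (cases "x \<le> pi/2")
    case True then show ?thesis using t0 x1 by (subst sin_mono_le_eq) auto
  next
    case False
    have "sin x = sin (pi - x)" by simp
    moreover have "sin t \<le> sin (pi - x)" using t0 x2 False by (subst sin_mono_le_eq) auto
    ultimately show ?thesis by simp
  qed
  then show ?thesis using sin_th_pos[OF assms(1)] by (simp add: sn_def t_def x_def)
qed



definition phi :: "nat \<Rightarrow> int \<Rightarrow> real^2 \<Rightarrow> real^2" where
  "phi q k w = vec2 (sn q k * w$1 + sn q (k+1) * w$2) (sn q (k-1) * w$1 + sn q k * w$2)"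

definition uu :: "nat \<Rightarrow> int \<Rightarrow> real^2 \<Rightarrow> real^2" where
  "uu q j w = vec2 (- sn q (j-1) * w$1 - sn q j * w$2) (sn q j * w$1 + sn q (j+1) * w$2)"

inductive_set WW :: "nat \<Rightarrow> (real^2) set" for q where
  "vec2 1 0 \<in> WW q"
| "vec2 0 1 \<in> WW q"
| "w \<in> WW q \<Longrightarrow> 1 \<le> k \<Longrightarrow> k \<le> int q - 1 \<Longrightarrow> phi q k w \<in> WW q"

definition good :: "real^2 \<Rightarrow> bool" where
  "good w \<longleftrightarrow> w$1 \<ge> 0 \<and> w$2 \<ge> 0 \<and> (w$1 = 0 \<or> w$1 \<ge> 1) \<and> (w$2 = 0 \<or> w$2 \<ge> 1)
      \<and> (w$1 \<ge> 1 \<or> w$2 \<ge> 1)"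

lemma ge1_mult: "(a::real) \<ge> 1 \<Longrightarrow> b \<ge> 1 \<Longrightarrow> a * b \<ge> 1"
  by (metis less_one mult_mono' mult.right_neutral not_le order.trans zero_le_one)

lemma WW_good: assumes q: "q \<ge> 3" shows "w \<in> WW q \<Longrightarrow> good w"
proof (induction rule: WW.induct)
  case 1 then show ?case by (simp add: good_def)
next
  case 2 then show ?case by (simp add: good_def)
next
  case (3 w k)
  define x where "x = w$1" define y where "y = w$2"
  have g: "x \<ge> 0" "y \<ge> 0" "x = 0 \<or> x \<ge> 1" "y = 0 \<or> y \<ge> 1" "x \<ge> 1 \<or> y \<ge> 1"
    using 3 by (auto simp: good_def x_def y_def)
  have sk: "sn q k \<ge> 1" using sn_ge1[OF q] 3 by auto
  have sk1: "sn q (k+1) \<ge> 0" using sn_ge0[OF q] 3 by auto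
  have skm: "sn q (k-1) \<ge> 0" using sn_ge0[OF q] 3 by auto
  have sk1': "k + 1 \<le> int q - 1 \<Longrightarrow> sn q (k+1) \<ge> 1" using sn_ge1[OF q] 3 by auto
  have skm': "k \<noteq> 1 \<Longrightarrow> sn q (k-1) \<ge> 1" using sn_ge1[OF q] 3 by auto
  have kq: "k + 1 > int q - 1 \<Longrightarrow> k + 1 = int q" using 3 by auto
  define x' where "x' = sn q k * x + sn q (k+1) * y"
  define y' where "y' = sn q (k-1) * x + sn q k * y"
  have p1: "sn q k * x \<ge> 0" "sn q (k+1) * y \<ge> 0" "sn q (k-1) * x \<ge> 0" "sn q k * y \<ge> 0"
    using sk sk1 skm g by auto
  have A: "x' \<ge> 0" "y' \<ge> 0" using p1 by (auto simp: x'_def y'_def)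
  have B: "x \<ge> 1 \<Longrightarrow> x' \<ge> 1" using ge1_mult[OF sk, of x] p1 by (simp add: x'_def)
  have C: "y \<ge> 1 \<Longrightarrow> y' \<ge> 1" using ge1_mult[OF sk, of y] p1 by (simp add: y'_def)
  have D: "x' = 0 \<or> x' \<ge> 1"
  proof (cases "x \<ge> 1")
    case True then show ?thesis using B by simp
  next
    case False
    then have "x = 0" "y \<ge> 1" using g by auto
    then show ?thesis
    proof (cases "k + 1 \<le> int q - 1")
      case True then show ?thesis using ge1_mult[OF sk1' \<open>y\<ge>1\<close>] \<open>x=0\<close> by (simp add: x'_def)
    next
      case False then show ?thesis using kq q \<open>x=0\<close> by (simp add: x'_def)
    qed
  qed
  have E: "y' = 0 \<or> y' \<ge> 1"
  proof (cases "y \<ge> 1")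
    case True then show ?thesis using C by simp
  next
    case False
    then have "y = 0" "x \<ge> 1" using g by auto
    then show ?thesis
    proof (cases "k = 1")
      case False then show ?thesis using ge1_mult[OF skm' \<open>x\<ge>1\<close>] \<open>y=0\<close> by (simp add: y'_def)
    next
      case True then show ?thesis using \<open>y=0\<close> by (simp add: y'_def)
    qed
  qed
  have F: "x' \<ge> 1 \<or> y' \<ge> 1" using g B C by auto
  show ?case using A D E F by (simp add: good_def phi_def x'_def y'_def x_def y_def)
qed

definition VV :: "nat \<Rightarrow> (real^2) set" where
  "VV q = {v. \<exists>w\<in>WW q. \<exists>j. 0 \<le> j \<and> j < int q \<and> (v = uu q j w \<or> v = - uu q j w)}"

lemma uu_0: "q \<ge> 3 \<Longrightarrow> uu q 0 w = w"
  by (simp add: uu_def sn_neg vec_eq_iff forall_2)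

lemma uu_shift: "q \<ge> 3 \<Longrightarrow> uu q (j + int q) w = - uu q j w"
proof -
  assume q: "q \<ge> 3"
  have "sn q (j + int q - 1) = - sn q (j - 1)" using sn_shift[OF q, of "j-1"] by (simp add: algebra_simps)
  moreover have "sn q (j + int q + 1) = - sn q (j + 1)" using sn_shift[OF q, of "j+1"] by (simp add: algebra_simps)
  ultimately show ?thesis using sn_shift[OF q, of j] by (simp add: uu_def vec_eq_iff forall_2)
qed

definition Umap :: "nat \<Rightarrow> real^2 \<Rightarrow> real^2" where
  "Umap q v = vec2 (- v$2) (v$1 + lambda_q q * v$2)"
definition Uinv :: "nat \<Rightarrow> real^2 \<Rightarrow> real^2" where
  "Uinv q v = vec2 (lambda_q q * v$1 + v$2) (- v$1)"
definition Smap :: "real^2 \<Rightarrow> real^2" where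
  "Smap v = vec2 (- v$2) (v$1)"

lemma Umap_uu: assumes q: "q \<ge> 3" shows "Umap q (uu q j w) = uu q (j+1) w"
proof -
  have r1: "sn q (j+1) + sn q (j-1) = lambda_q q * sn q j" using sn_rec[OF q, of j] .
  have r2: "sn q (j+1+1) + sn q (j+1-1) = lambda_q q * sn q (j+1)" using sn_rec[OF q, of "j+1"] .
  have "(Umap q (uu q j w))$2 = (uu q (j+1) w)$2"
    unfolding Umap_def uu_def vec2_nth using r1 r2 by simp algebra
  moreover have "(Umap q (uu q j w))$1 = (uu q (j+1) w)$1"
    unfolding Umap_def uu_def vec2_nth by simp
  ultimately show ?thesis by (simp add: vec_eq_iff forall_2)
qed

lemma Uinv_uu: assumes q: "q \<ge> 3" shows "Uinv q (uu q j w) = uu q (j-1) w"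
proof -
  have r1: "sn q (j+1) + sn q (j-1) = lambda_q q * sn q j" using sn_rec[OF q, of j] .
  have r2: "sn q (j-1+1) + sn q (j-1-1) = lambda_q q * sn q (j-1)" using sn_rec[OF q, of "j-1"] .
  have "(Uinv q (uu q j w))$1 = (uu q (j-1) w)$1"
    unfolding Uinv_def uu_def vec2_nth using r1 r2 by simp algebra
  moreover have "(Uinv q (uu q j w))$2 = (uu q (j-1) w)$2"
    unfolding Uinv_def uu_def vec2_nth by simp
  ultimately show ?thesis by (simp add: vec_eq_iff forall_2)
qed

lemma Umap_neg: "Umap q (- v) = - Umap q v" by (simp add: Umap_def vec_eq_iff forall_2)
lemma Uinv_neg: "Uinv q (- v) = - Uinv q v" by (simp add: Uinv_def vec_eq_iff forall_2)
lemma Smap_neg: "Smap (- v) = - Smap v" by (simp add: Smap_def vec_eq_iff forall_2)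

lemma VV_neg: "v \<in> VV q \<Longrightarrow> - v \<in> VV q"
  unfolding VV_def by force

lemma VV_uu: "w \<in> WW q \<Longrightarrow> 0 \<le> j \<Longrightarrow> j < int q \<Longrightarrow> uu q j w \<in> VV q"
  unfolding VV_def by blast

lemma VV_Umap_uu: assumes q: "q \<ge> 3" and w: "w \<in> WW q" and j: "0 \<le> j" "j < int q"
  shows "Umap q (uu q j w) \<in> VV q"
proof (cases "j + 1 < int q")
  case True then show ?thesis using Umap_uu[OF q] VV_uu[OF w] j by simp
next
  case False
  then have "j + 1 = 0 + int q" using j by simp
  then have "Umap q (uu q j w) = - uu q 0 w" using Umap_uu[OF q] uu_shift[OF q, of 0] by metis
  then show ?thesis using VV_neg VV_uu[OF w] q by auto
qed

lemma VV_Uinv_uu: assumes q: "q \<ge> 3" and w: "w \<in> WW q" and j: "0 \<le> j" "j < int q"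
  shows "Uinv q (uu q j w) \<in> VV q"
proof (cases "j \<ge> 1")
  case True then show ?thesis using Uinv_uu[OF q] VV_uu[OF w] j by simp
next
  case False
  then have "j - 1 = (int q - 1) + int q - 2 * int q" using j by simp
  have "uu q (int q - 1 - int q) w = - uu q (int q - 1) w"
    using uu_shift[OF q, of "int q - 1 - int q"] by simp
  moreover have "j = 0" using False j by simp
  ultimately have "Uinv q (uu q j w) = - uu q (int q - 1) w" using Uinv_uu[OF q, of j w] by simp
  then show ?thesis using VV_neg VV_uu[OF w] q by auto
qed

lemma VV_Smap_uu: assumes q: "q \<ge> 3" and w: "w \<in> WW q" and j: "0 \<le> j" "j < int q"
  shows "Smap (uu q j w) \<in> VV q"
proof (cases "j = 0")
  case False
  have "Smap (uu q j w) = - uu q 0 (phi q j w)"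
    unfolding uu_0[OF q] by (simp add: Smap_def uu_def phi_def vec_eq_iff forall_2)
  moreover have "phi q j w \<in> WW q" using WW.intros(3)[OF w] False j by auto
  ultimately show ?thesis using VV_neg VV_uu q by auto
next
  case True
  then have e: "Smap (uu q j w) = Smap w" using uu_0[OF q] by simp
  have "Smap w \<in> VV q" using w
  proof cases
    case 1
    then have "Smap w = uu q 0 (vec2 0 1)" using uu_0[OF q] by (simp add: Smap_def)
    then show ?thesis using VV_uu[OF WW.intros(2)] q by auto
  next
    case 2
    then have "Smap w = - uu q 0 (vec2 1 0)" using uu_0[OF q] by (simp add: Smap_def vec2_neg)
    then show ?thesis using VV_neg VV_uu[OF WW.intros(1)] q by auto
  next
    case (3 w' k)
    then have "Smap w = uu q k w'" by (simp add: Smap_def uu_def phi_def)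
    then show ?thesis using VV_uu[OF 3(2)] 3 by auto
  qed
  then show ?thesis using e by simp
qed

lemma VV_cases: "v \<in> VV q \<Longrightarrow> (\<And>w j. w \<in> WW q \<Longrightarrow> 0 \<le> j \<Longrightarrow> j < int q \<Longrightarrow> (v = uu q j w \<or> v = - uu q j w) \<Longrightarrow> P) \<Longrightarrow> P"
  unfolding VV_def by blast

lemma VV_Umap: "q \<ge> 3 \<Longrightarrow> v \<in> VV q \<Longrightarrow> Umap q v \<in> VV q"
  by (erule VV_cases) (metis Umap_neg VV_neg VV_Umap_uu)
lemma VV_Uinv: "q \<ge> 3 \<Longrightarrow> v \<in> VV q \<Longrightarrow> Uinv q v \<in> VV q"
  by (erule VV_cases) (metis Uinv_neg VV_neg VV_Uinv_uu)
lemma VV_Smap: "q \<ge> 3 \<Longrightarrow> v \<in> VV q \<Longrightarrow> Smap v \<in> VV q"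
  by (erule VV_cases) (metis Smap_neg VV_neg VV_Smap_uu)

lemma VV_second: assumes q: "q \<ge> 3" and v: "v \<in> VV q" shows "v$2 = 0 \<or> \<bar>v$2\<bar> \<ge> 1"
  using v
proof (rule VV_cases)
  fix w j assume w: "w \<in> WW q" and j: "0 \<le> j" "j < int q" and vv: "v = uu q j w \<or> v = - uu q j w"
  have g: "good w" using WW_good[OF q w] .
  have "\<bar>v$2\<bar> = \<bar>sn q j * w$1 + sn q (j+1) * w$2\<bar>" using vv by (auto simp: uu_def)
  moreover have "sn q j * w$1 + sn q (j+1) * w$2 = 0 \<or> sn q j * w$1 + sn q (j+1) * w$2 \<ge> 1"
  proof -
    consider "j = 0" | "j = int q - 1" | "1 \<le> j \<and> j \<le> int q - 2" using j by linarith
    then show ?thesis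
    proof cases
      case 1 then show ?thesis using g q by (simp add: good_def)
    next
      case 2 then show ?thesis using g q sn_qm1[OF q] by (simp add: good_def)
    next
      case 3
      have a: "sn q j \<ge> 1" "sn q (j+1) \<ge> 1" using sn_ge1[OF q] 3 by auto
      have b: "sn q j * w$1 \<ge> 0" "sn q (j+1) * w$2 \<ge> 0" using a g by (auto simp: good_def)
      have "w$1 \<ge> 1 \<or> w$2 \<ge> 1" using g by (simp add: good_def)
      then show ?thesis using ge1_mult[OF a(1), of "w$1"] ge1_mult[OF a(2), of "w$2"] b by auto
    qed
  qed
  ultimately show ?thesis by auto
qed



abbreviation "e1 \<equiv> vec2 1 0"

lemma S_act: "S_mat *v v = Smap v"
  by (subst vec2_eta[of v]) (simp add: S_mat_def mat2_mulv Smap_def)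
lemma Sinv_act: "mat2 0 1 (-1) 0 *v v = - Smap v"
  by (subst vec2_eta[of v]) (simp add: mat2_mulv Smap_def vec2_neg)
lemma T_act: "T_mat q *v v = - Smap (Umap q v)"
  by (subst vec2_eta[of v]) (simp add: T_mat_def mat2_mulv Smap_def Umap_def vec2_neg add.commute)
lemma Tinv_act: "mat2 1 (- lambda_q q) 0 1 *v v = Uinv q (Smap v)"
  by (subst vec2_eta[of v]) (simp add: mat2_mulv Smap_def Uinv_def)

lemma G_VV: assumes q: "q \<ge> 3" shows "g \<in> hecke_group q \<Longrightarrow> g *v e1 \<in> VV q"
proof (induction rule: hecke_group.induct)
  case hg_id
  have "e1 \<in> VV q" using VV_uu[OF WW.intros(1), of 0 q] uu_0[OF q] q by simp
  then show ?case by simp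
next
  case (hg_S g) then show ?case by (simp add: matrix_vector_mul_assoc[symmetric] S_act VV_Smap[OF q])
next
  case (hg_Sinv g) then show ?case by (simp add: matrix_vector_mul_assoc[symmetric] Sinv_act VV_Smap[OF q] VV_neg)
next
  case (hg_T g) then show ?case by (simp add: matrix_vector_mul_assoc[symmetric] T_act VV_Smap[OF q] VV_Umap[OF q] VV_neg)
next
  case (hg_Tinv g) then show ?case by (simp add: matrix_vector_mul_assoc[symmetric] Tinv_act VV_Smap[OF q] VV_Uinv[OF q])
qed

lemma G_second: "q \<ge> 3 \<Longrightarrow> g \<in> hecke_group q \<Longrightarrow> (g *v e1)$2 = 0 \<or> \<bar>(g *v e1)$2\<bar> \<ge> 1"
  using G_VV VV_second by blast

lemma G_det: "g \<in> hecke_group q \<Longrightarrow> det g = 1"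
  by (induction rule: hecke_group.induct)
     (simp_all add: det_mul S_mat_def T_mat_def mat2_det)

lemma G_mult: "g \<in> hecke_group q \<Longrightarrow> h \<in> hecke_group q \<Longrightarrow> g ** h \<in> hecke_group q"
  by (induction rule: hecke_group.induct)
     (auto simp: matrix_mul_assoc[symmetric] intro: hecke_group.intros)

lemma gen_in: "S_mat \<in> hecke_group q" "mat2 0 1 (-1) 0 \<in> hecke_group q"
   "T_mat q \<in> hecke_group q" "mat2 1 (- lambda_q q) 0 1 \<in> hecke_group q"
  using hecke_group.hg_S[OF hecke_group.hg_id, of q] hecke_group.hg_Sinv[OF hecke_group.hg_id, of q]
    hecke_group.hg_T[OF hecke_group.hg_id, of q] hecke_group.hg_Tinv[OF hecke_group.hg_id, of q] by simp_all

definition adj :: "real^2^2 \<Rightarrow> real^2^2" where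
  "adj M = mat2 (M$2$2) (-(M$1$2)) (-(M$2$1)) (M$1$1)"

lemma adj_mult: "adj (M ** N) = adj N ** adj M"
  by (simp add: adj_def vec_eq_iff forall_2 matrix_matrix_mult_def sum_2 algebra_simps)

lemma adj_gens: "adj S_mat = mat2 0 1 (-1) 0" "adj (mat2 0 1 (-1) 0) = S_mat"
  "adj (T_mat q) = mat2 1 (- lambda_q q) 0 1" "adj (mat2 1 (- lambda_q q) 0 1) = T_mat q"
  "adj (mat 1) = mat 1"
  by (simp_all add: adj_def S_mat_def T_mat_def mat1_mat2)

lemma G_adj: "g \<in> hecke_group q \<Longrightarrow> adj g \<in> hecke_group q"
proof (induction rule: hecke_group.induct)
  case hg_id
  then show ?case by (simp add: adj_gens hecke_group.hg_id)
next
  case (hg_S g) then show ?case using gen_in by (simp add: adj_mult adj_gens G_mult)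
next
  case (hg_Sinv g) then show ?case using gen_in by (simp add: adj_mult adj_gens G_mult)
next
  case (hg_T g) then show ?case using gen_in by (simp add: adj_mult adj_gens G_mult)
next
  case (hg_Tinv g) then show ?case using gen_in by (simp add: adj_mult adj_gens G_mult)
qed

lemma adj_inv: "det M = 1 \<Longrightarrow> adj M ** M = mat 1" "det M = 1 \<Longrightarrow> M ** adj M = mat 1"
  by (simp_all add: det_2 adj_def vec_eq_iff forall_2 matrix_matrix_mult_def sum_2 mat_def algebra_simps)

definition tk :: "nat \<Rightarrow> int \<Rightarrow> real^2^2" where
  "tk q k = mat2 1 (of_int k * lambda_q q) 0 1"

lemma tk_in: "tk q k \<in> hecke_group q"
proof -
  have a: "tk q (int n) \<in> hecke_group q \<and> tk q (- int n) \<in> hecke_group q" for n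
  proof (induction n)
    case 0 then show ?case using hecke_group.hg_id[of q] by (simp add: tk_def mat1_mat2)
  next
    case (Suc n)
    have "tk q (int (Suc n)) = T_mat q ** tk q (int n)"
      by (simp add: tk_def T_mat_def mat2_mult algebra_simps)
    moreover have "tk q (- int (Suc n)) = mat2 1 (- lambda_q q) 0 1 ** tk q (- int n)"
      by (simp add: tk_def mat2_mult algebra_simps)
    ultimately show ?case using Suc hecke_group.intros by metis
  qed
  show ?thesis
  proof (cases "k \<ge> 0")
    case True then show ?thesis using a[of "nat k"] by simp
  next
    case False then show ?thesis using a[of "nat (-k)"] by simp
  qed
qed

lemma G_pair: assumes q: "q \<ge> 3" and g: "g \<in> hecke_group q" and h: "h \<in> hecke_group q"
  shows "(g *v e1)$1 * (h *v e1)$2 - (g *v e1)$2 * (h *v e1)$1 = 0 \<or>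
         \<bar>(g *v e1)$1 * (h *v e1)$2 - (g *v e1)$2 * (h *v e1)$1\<bar> \<ge> 1"
proof -
  have m: "adj g ** h \<in> hecke_group q" using G_mult G_adj g h by blast
  have "(g *v e1)$1 * (h *v e1)$2 - (g *v e1)$2 * (h *v e1)$1 = ((adj g ** h) *v e1)$2"
    by (simp add: adj_def vec2_def matrix_matrix_mult_def matrix_vector_mult_def sum_2 algebra_simps)
  then show ?thesis using G_second[OF q m] by simp
qed



lemma lam_bounds: assumes q: "q \<ge> 3" shows "0 < lambda_q q" "lambda_q q < 2"
proof -
  have t: "0 < pi / real q" "pi / real q < pi / 2" using q by (auto simp: field_simps)
  show "0 < lambda_q q" using cos_gt_zero[OF t] by (simp add: lambda_q_def)
  have t3: "pi / real q \<le> pi" using q by (simp add: field_simps)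
  have "cos (pi / real q) < cos 0" using t t3 by (subst cos_mono_less_eq) auto
  then show "lambda_q q < 2" by (simp add: lambda_q_def)
qed

lemma L_char: "p \<in> mat_image A (Lambda_q q) \<longleftrightarrow> (\<exists>g\<in>hecke_group q. p = (A ** g) *v e1)"
proof
  assume "p \<in> mat_image A (Lambda_q q)"
  then show "\<exists>g\<in>hecke_group q. p = (A ** g) *v e1"
    by (auto simp: mat_image_def Lambda_q_def matrix_vector_mul_assoc)
next
  assume "\<exists>g\<in>hecke_group q. p = (A ** g) *v e1"
  then obtain g where "g \<in> hecke_group q" "p = A *v (g *v e1)" by (auto simp: matrix_vector_mul_assoc)
  then show "p \<in> mat_image A (Lambda_q q)" unfolding mat_image_def Lambda_q_def by blast
qed

lemma L_in: "g \<in> hecke_group q \<Longrightarrow> (A ** g) *v e1 \<in> mat_image A (Lambda_q q)"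
  using L_char by blast

lemma SS_e1: "(S_mat ** S_mat) *v e1 = - e1"
  by (simp add: matrix_vector_mul_assoc[symmetric] S_act Smap_def vec2_neg)

lemma L_neg: assumes "p \<in> mat_image A (Lambda_q q)" shows "- p \<in> mat_image A (Lambda_q q)"
proof -
  obtain g where g: "g \<in> hecke_group q" "p = (A ** g) *v e1" using assms L_char by blast
  have "g ** (S_mat ** S_mat) \<in> hecke_group q" using G_mult gen_in g by blast
  moreover have "(A ** (g ** (S_mat ** S_mat))) *v e1 = - p"
  proof -
    have e: "vec2 (-1) 0 = - e1" by (simp add: vec2_neg)
    show ?thesis using g by (simp add: matrix_vector_mul_assoc[symmetric] S_act Smap_def e vec.neg)
  qed
  ultimately show ?thesis using L_in by metis
qed

definition dt :: "real^2 \<Rightarrow> real^2 \<Rightarrow> real" where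
  "dt p p' = p$1 * p'$2 - p$2 * p'$1"

lemma dt_mat: "dt (A *v v) (A *v w) = det A * dt v w"
  by (simp add: dt_def det_2 matrix_vector_mult_def sum_2 algebra_simps)

lemma L_dt: assumes q: "q \<ge> 3" and A: "det A = 1"
  and p: "p \<in> mat_image A (Lambda_q q)" and p': "p' \<in> mat_image A (Lambda_q q)"
  shows "dt p p' = 0 \<or> \<bar>dt p p'\<bar> \<ge> 1"
proof -
  obtain g where g: "g \<in> hecke_group q" "p = (A ** g) *v e1" using p L_char by blast
  obtain h where h: "h \<in> hecke_group q" "p' = (A ** h) *v e1" using p' L_char by blast
  have "dt p p' = dt (g *v e1) (h *v e1)"
    using g h A by (simp add: matrix_vector_mul_assoc[symmetric] dt_mat)
  then show ?thesis using G_pair[OF q g(1) h(1)] by (simp add: dt_def)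
qed



lemma mat_image_eq: assumes "\<And>p. p \<in> L \<Longrightarrow> H *v p \<in> L" and "\<And>p. p \<in> L \<Longrightarrow> \<exists>p'\<in>L. p = H *v p'"
  shows "mat_image H L = L"
  using assms unfolding mat_image_def by blast

lemma hstab: assumes q: "q \<ge> 3" and A: "det A = 1" and a: "a \<noteq> 0"
  and v: "vec2 0 a \<in> mat_image A (Lambda_q q)"
  shows "mat_image (h_mat (lambda_q q * a^2)) (mat_image A (Lambda_q q)) = mat_image A (Lambda_q q)"
proof -
  define L where "L = mat_image A (Lambda_q q)"
  define s where "s = lambda_q q * a^2"
  define h where "h = h_mat s"
  define T where "T = T_mat q"
  define Ti where "Ti = mat2 1 (- lambda_q q) 0 1"
  obtain g0 where g0: "g0 \<in> hecke_group q" "vec2 0 a = (A ** g0) *v e1" using v L_char by blast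
  define B where "B = A ** g0"
  have dg0: "det g0 = 1" using G_det g0 by blast
  have dB: "det B = 1" using A dg0 by (simp add: B_def det_mul)
  have B1: "B$1$1 = 0" "B$2$1 = a" using g0 unfolding B_def[symmetric]
    by (subst (asm) mat2_eta[of B], simp add: mat2_mulv vec2_eq_iff)+
  have B12: "B$1$2 = - 1 / a" using dB B1 a by (simp add: det_2 field_simps)
  have ab: "a * B$1$2 = -1" using B12 a by simp
  have aux: "a * (a * (lambda_q q * B$1$2)) = - (a * lambda_q q)"
  proof -
    have "a * (a * (lambda_q q * B$1$2)) = a * lambda_q q * (a * B$1$2)" by (simp add: algebra_simps)
    then show ?thesis using ab by simp
  qed
  have hB: "h ** B = B ** T"
    apply (subst (1 2) mat2_eta[of B])
    using B1 aux a by (simp add: h_def h_mat_def T_def T_mat_def s_def mat2_mult power2_eq_square algebra_simps)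
  define C where "C = g0 ** T ** adj g0"
  define C' where "C' = g0 ** Ti ** adj g0"
  have C: "C \<in> hecke_group q" "C' \<in> hecke_group q"
    unfolding C_def C'_def T_def Ti_def using G_mult G_adj g0 gen_in by meson+
  have ag: "g0 ** adj g0 = mat 1" using adj_inv dg0 by blast
  have AC: "A ** C = h ** A"
  proof -
    have "A ** C = B ** T ** adj g0" by (simp add: C_def B_def matrix_mul_assoc)
    also have "\<dots> = h ** B ** adj g0" by (simp add: hB)
    also have "\<dots> = h ** A ** (g0 ** adj g0)" by (simp add: B_def matrix_mul_assoc)
    also have "\<dots> = h ** A" by (simp add: ag)
    finally show ?thesis .
  qed
  have TTi: "T ** Ti = mat 1" by (simp add: T_def Ti_def T_mat_def mat2_mult mat1_mat2)
  have CC: "C ** C' = mat 1"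
  proof -
    have "C ** C' = g0 ** (T ** ((adj g0 ** g0) ** Ti)) ** adj g0"
      by (simp add: C_def C'_def matrix_mul_assoc)
    also have "\<dots> = mat 1" using adj_inv dg0 TTi ag by simp
    finally show ?thesis .
  qed
  have "mat_image h L = L"
  proof (rule mat_image_eq)
    fix p assume "p \<in> L"
    then obtain g where g: "g \<in> hecke_group q" "p = (A ** g) *v e1" using L_char L_def by blast
    have "A ** (C ** g) = h ** (A ** g)" using AC by (simp add: matrix_mul_assoc)
    then have "h *v p = (A ** (C ** g)) *v e1" using g by (simp add: matrix_vector_mul_assoc)
    then show "h *v p \<in> L" using L_in[of "C ** g"] G_mult C g L_def by auto
  next
    fix p assume "p \<in> L"
    then obtain g where g: "g \<in> hecke_group q" "p = (A ** g) *v e1" using L_char L_def by blast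
    have "p = h *v ((A ** (C' ** g)) *v e1)"
    proof -
      have "A ** g = A ** (C ** C') ** g" using CC by simp
      also have "\<dots> = h ** (A ** (C' ** g))" using AC by (simp add: matrix_mul_assoc)
      finally show ?thesis using g by (simp add: matrix_vector_mul_assoc)
    qed
    then show "\<exists>p'\<in>L. p = h *v p'" using L_in[of "C' ** g"] G_mult C g L_def by auto
  qed
  then show ?thesis by (simp add: L_def h_def s_def)
qed



lemma h_in: "mat_image H L = L \<Longrightarrow> p \<in> L \<Longrightarrow> H *v p \<in> L"
  unfolding mat_image_def by blast

lemma h_act: "h_mat s *v p = vec2 (p$1) (p$2 - s * p$1)"
  by (subst vec2_eta[of p]) (simp add: h_mat_def mat2_mulv)

lemma p23: assumes q: "q \<ge> 3" and A: "det A = 1" and s: "s > 0"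
  and hs: "mat_image (h_mat s) (mat_image A (Lambda_q q)) = mat_image A (Lambda_q q)"
  shows "mat_image A (Lambda_q q) \<inter> strip (1/(s+1)) = {}"
proof (rule ccontr)
  assume "mat_image A (Lambda_q q) \<inter> strip (1/(s+1)) \<noteq> {}"
  then obtain p where p: "p \<in> mat_image A (Lambda_q q)" "0 < p$1" "p$1 \<le> 1/(s+1)"
    by (auto simp: strip_def)
  have hp: "h_mat s *v p \<in> mat_image A (Lambda_q q)" using h_in[OF hs p(1)] .
  have d: "dt p (h_mat s *v p) = - (s * (p$1)^2)"
    by (simp add: dt_def h_act power2_eq_square algebra_simps)
  have "s * (p$1)^2 > 0" using s p by simp
  then have "s * (p$1)^2 \<ge> 1" using L_dt[OF q A p(1) hp] d by auto
  moreover have "(p$1)^2 \<le> (1/(s+1))^2" using p by (intro power_mono) auto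
  moreover have "s * (1/(s+1))^2 < 1"
  proof -
    have "0 < s * s" using s by simp
    moreover have "(s+1)^2 = s * s + 2 * s + 1" by (simp add: power2_eq_square algebra_simps)
    ultimately have "s < (s+1)^2" using s by linarith
    moreover have "(s+1)^2 > 0" using s by simp
    ultimately show ?thesis using s by (simp add: power_divide divide_less_eq del: zero_less_power2)
  qed
  ultimately show False using s
    by (smt (verit) mult_left_mono)
qed



lemma Me1: "(M *v e1)$1 = M$1$1" "(M *v e1)$2 = M$2$1"
  by (simp_all add: matrix_vector_mult_def sum_2 vec2_def)

lemma red_step: assumes q: "q \<ge> 3" and x: "(M::real^2^2)$1$1 \<noteq> 0"
  shows "\<exists>k. \<bar>(M ** (tk q k ** S_mat))$1$1\<bar> \<le> lambda_q q / 2 * \<bar>M$1$1\<bar>"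
proof -
  define l where "l = lambda_q q"
  have l: "0 < l" "l < 2" using lam_bounds[OF q] by (auto simp: l_def)
  define x where "x = M$1$1" define y where "y = M$1$2"
  define r where "r = - y / (l * x)"
  define k where "k = \<lfloor>r + 1/2\<rfloor>"
  have k1: "of_int k \<le> r + 1/2" "r + 1/2 < of_int k + 1" unfolding k_def by linarith+
  have e: "(M ** (tk q k ** S_mat))$1$1 = of_int k * l * x + y"
    by (subst mat2_eta[of M]) (simp add: tk_def S_mat_def mat2_mult l_def x_def y_def algebra_simps)
  have "of_int k * l * x + y = l * x * (of_int k - r)"
    using x l by (simp add: r_def x_def field_simps)
  then have "\<bar>(M ** (tk q k ** S_mat))$1$1\<bar> = l * \<bar>x\<bar> * \<bar>of_int k - r\<bar>"
    using e l by (simp add: abs_mult)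
  also have "\<dots> \<le> l * \<bar>x\<bar> * (1/2)"
  proof -
    have "\<bar>of_int k - r\<bar> \<le> 1/2" using k1 by (auto simp: abs_if)
    then show ?thesis using l by (intro mult_left_mono) auto
  qed
  finally show ?thesis by (auto simp: l_def x_def)
qed

lemma p31: assumes q: "q \<ge> 3" and A: "det A = 1" and t: "\<tau> > 0"
  and em: "mat_image A (Lambda_q q) \<inter> strip \<tau> = {}"
  shows "\<exists>y. y \<noteq> 0 \<and> vec2 0 y \<in> mat_image A (Lambda_q q)"
proof (rule ccontr)
  assume nv: "\<not> ?thesis"
  have nz: "(A ** g)$1$1 \<noteq> 0" if g: "g \<in> hecke_group q" for g
  proof
    assume 0: "(A ** g)$1$1 = 0"
    have "det (A ** g) = 1" using A G_det[OF g] by (simp add: det_mul)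
    then have "(A ** g)$2$1 \<noteq> 0" using 0 by (auto simp: det_2)
    moreover have "(A ** g) *v e1 = vec2 0 ((A ** g)$2$1)"
      using 0 by (subst mat2_eta[of "A ** g"]) (simp add: mat2_mulv)
    ultimately show False using nv L_in[OF g, of A] by metis
  qed
  have red: "\<exists>g\<in>hecke_group q. \<bar>(A ** g)$1$1\<bar> \<le> (lambda_q q / 2)^n * \<bar>A$1$1\<bar>" for n
  proof (induction n)
    case 0 show ?case by (rule bexI[OF _ hecke_group.hg_id]) simp
  next
    case (Suc n)
    then obtain g where g: "g \<in> hecke_group q" "\<bar>(A ** g)$1$1\<bar> \<le> (lambda_q q / 2)^n * \<bar>A$1$1\<bar>" by blast
    obtain k where k: "\<bar>((A ** g) ** (tk q k ** S_mat))$1$1\<bar> \<le> lambda_q q / 2 * \<bar>(A ** g)$1$1\<bar>"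
      using red_step[OF q nz[OF g(1)]] by blast
    have g': "g ** (tk q k ** S_mat) \<in> hecke_group q" using G_mult tk_in gen_in g by blast
    have l: "0 \<le> lambda_q q / 2" using lam_bounds[OF q] by simp
    have "\<bar>(A ** (g ** (tk q k ** S_mat)))$1$1\<bar> \<le> lambda_q q / 2 * ((lambda_q q / 2)^n * \<bar>A$1$1\<bar>)"
      using k mult_left_mono[OF g(2) l] by (simp add: matrix_mul_assoc)
    then show ?case using g' by (auto simp: algebra_simps)
  qed
  have A0: "A$1$1 \<noteq> 0" using nz[OF hecke_group.hg_id] by simp
  have l1: "lambda_q q / 2 < 1" using lam_bounds[OF q] by simp
  have "0 < \<tau> / \<bar>A$1$1\<bar>" using t A0 by simp
  then obtain n where n: "(lambda_q q / 2)^n < \<tau> / \<bar>A$1$1\<bar>"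
    using real_arch_pow_inv[OF _ l1] by blast
  obtain g where g: "g \<in> hecke_group q" "\<bar>(A ** g)$1$1\<bar> \<le> (lambda_q q / 2)^n * \<bar>A$1$1\<bar>"
    using red by blast
  have "(lambda_q q / 2)^n * \<bar>A$1$1\<bar> < \<tau>" using n A0 by (simp add: pos_less_divide_eq)
  then have small: "\<bar>(A ** g)$1$1\<bar> < \<tau>" using g by linarith
  define p where "p = (A ** g) *v e1"
  have p: "p \<in> mat_image A (Lambda_q q)" using L_in[OF g(1)] p_def by simp
  have p1: "p$1 = (A ** g)$1$1" by (simp add: p_def Me1)
  show False
  proof (cases "p$1 > 0")
    case True
    then have "p \<in> strip \<tau>" using small p1 by (simp add: strip_def)
    then show False using em p by blast
  next
    case False
    then have "(-p)$1 > 0" using nz[OF g(1)] p1 by simp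
    then have "-p \<in> strip \<tau>" using small p1 by (simp add: strip_def)
    then show False using em L_neg[OF p] by blast
  qed
qed



lemma mult_mat2_nth: "(M ** mat2 a b c d)$1$1 = M$1$1*a + M$1$2*c"
  "(M ** mat2 a b c d)$2$1 = M$2$1*a + M$2$2*c"
  by (simp_all add: matrix_matrix_mult_def sum_2)

lemma minimal: assumes q: "q \<ge> 3" and A: "det A = 1" and a: "a > 0"
  and v: "vec2 0 a \<in> mat_image A (Lambda_q q)" and s: "s > 0"
  and hs: "mat_image (h_mat s) (mat_image A (Lambda_q q)) = mat_image A (Lambda_q q)"
  shows "lambda_q q * a^2 \<le> s"
proof (rule ccontr)
  assume con: "\<not> ?thesis"
  define l where "l = lambda_q q"
  have l: "l < 2" using lam_bounds[OF q] by (simp add: l_def)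
  obtain g0 where g0: "g0 \<in> hecke_group q" "vec2 0 a = (A ** g0) *v e1" using v L_char by blast
  define B where "B = A ** g0"
  have dB: "det B = 1" using A G_det[OF g0(1)] by (simp add: B_def det_mul)
  have Bv: "B *v e1 = vec2 0 a" using g0(2) by (simp add: B_def)
  have B1: "B$1$1 = 0" "B$2$1 = a" using Me1[of B] unfolding Bv by simp_all
  define b where "b = B$1$2" define d where "d = B$2$2"
  have ab: "a * b = -1" using dB B1 by (simp add: det_2 b_def) (metis mult.commute)
  define w where "w = (A ** (g0 ** S_mat)) *v e1"
  define w' where "w' = (A ** (g0 ** (T_mat q ** S_mat))) *v e1"
  have wL: "w \<in> mat_image A (Lambda_q q)" unfolding w_def by (rule L_in[OF G_mult[OF g0(1) gen_in(1)]])
  have TSG: "T_mat q ** S_mat \<in> hecke_group q" by (rule G_mult[OF gen_in(3) gen_in(1)])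
  have w'L: "w' \<in> mat_image A (Lambda_q q)" unfolding w'_def by (rule L_in[OF G_mult[OF g0(1) TSG]])
  have hwL: "h_mat s *v w \<in> mat_image A (Lambda_q q)" using h_in[OF hs wL] .
  have TS: "T_mat q ** S_mat = mat2 l (-1) 1 0" by (simp add: T_mat_def S_mat_def mat2_mult l_def)
  have w: "w$1 = b" "w$2 = d"
    unfolding w_def matrix_mul_assoc B_def[symmetric] Me1 S_mat_def mult_mat2_nth using B1 by (simp_all add: b_def d_def)
  have w': "w'$1 = b" "w'$2 = a * l + d"
    unfolding w'_def matrix_mul_assoc B_def[symmetric] Me1 TS mult_mat2_nth using B1 by (simp_all add: b_def d_def)
  have d1: "dt w (h_mat s *v w) = - (s * b^2)"
    by (simp add: dt_def h_act w power2_eq_square algebra_simps)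
  have d2: "dt (h_mat s *v w) w' = s * b^2 - l"
  proof -
    have "dt (h_mat s *v w) w' = l * (a * b) + s * b^2"
      by (simp add: dt_def h_act w w' power2_eq_square algebra_simps)
    then show ?thesis using ab by simp
  qed
  have b0: "b \<noteq> 0" using ab by auto
  have "s * b^2 > 0" using s b0 by simp
  then have f1: "s * b^2 \<ge> 1" using L_dt[OF q A wL hwL] d1 by auto
  have "s * b^2 * a^2 = s" using ab by (simp add: power_mult_distrib[symmetric] mult.commute)
  moreover have "s < l * a^2" using con by (simp add: l_def)
  ultimately have "s * b^2 * a^2 < l * a^2" by linarith
  then have f2: "s * b^2 < l" using a by simp
  have "\<bar>s * b^2 - l\<bar> \<ge> 1" using L_dt[OF q A hwL w'L] d2 f2 by auto
  then show False using f1 f2 l by linarith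
qed

theorem mainTheorem6:
  fixes q :: nat and A :: "real^2^2"
  assumes "q \<ge> 3" and "det A = 1"
  shows "((\<exists>y. y \<noteq> 0 \<and> vec2 0 y \<in> mat_image A (Lambda_q q))
            \<longleftrightarrow> (\<exists>s0>0. mat_image (h_mat s0) (mat_image A (Lambda_q q)) = mat_image A (Lambda_q q)))
       \<and> ((\<exists>s0>0. mat_image (h_mat s0) (mat_image A (Lambda_q q)) = mat_image A (Lambda_q q))
            \<longleftrightarrow> (\<exists>\<tau>0>0. mat_image A (Lambda_q q) \<inter> strip \<tau>0 = {}))
       \<and> (\<forall>a>0. (vec2 0 a \<in> mat_image A (Lambda_q q) \<or> vec2 0 (-a) \<in> mat_image A (Lambda_q q))
            \<longrightarrow> (let P = {s0. s0 > 0 \<and> mat_image (h_mat s0) (mat_image A (Lambda_q q)) = mat_image A (Lambda_q q)}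
                 in lambda_q q * a^2 \<in> P \<and> (\<forall>s\<in>P. lambda_q q * a^2 \<le> s)))"
proof -
  note q = assms(1) and A = assms(2)
  define L where "L = mat_image A (Lambda_q q)"
  have lp: "lambda_q q > 0" using lam_bounds[OF q] by simp
  have VH: "\<exists>s0>0. mat_image (h_mat s0) L = L" if hyp: "\<exists>y. y \<noteq> 0 \<and> vec2 0 y \<in> L"
  proof -
    obtain y where y: "y \<noteq> 0" "vec2 0 y \<in> L" using hyp by blast
    have pos: "lambda_q q * y^2 > 0" using y lp by simp
    have "mat_image (h_mat (lambda_q q * y^2)) L = L"
      unfolding L_def by (rule hstab[OF q A y(1) y(2)[unfolded L_def]])
    then show ?thesis using pos by (intro exI[of _ "lambda_q q * y^2"] conjI)
  qed
  have HS: "\<exists>\<tau>0>0. L \<inter> strip \<tau>0 = {}" if hyp: "\<exists>s0>0. mat_image (h_mat s0) L = L"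
  proof -
    obtain s where s: "s > 0" "mat_image (h_mat s) L = L" using hyp by blast
    have pos: "1/(s+1) > 0" using s by simp
    have "L \<inter> strip (1/(s+1)) = {}"
      unfolding L_def by (rule p23[OF q A s(1) s(2)[unfolded L_def]])
    then show ?thesis using pos by (intro exI[of _ "1/(s+1)"] conjI)
  qed
  have SV: "\<exists>y. y \<noteq> 0 \<and> vec2 0 y \<in> L" if hyp: "\<exists>\<tau>0>0. L \<inter> strip \<tau>0 = {}"
  proof -
    obtain t where t: "t > 0" "L \<inter> strip t = {}" using hyp by blast
    show ?thesis unfolding L_def by (rule p31[OF q A t(1) t(2)[unfolded L_def]])
  qed
  have P3: "let P = {s0. s0 > 0 \<and> mat_image (h_mat s0) L = L}
                 in lambda_q q * a^2 \<in> P \<and> (\<forall>s\<in>P. lambda_q q * a^2 \<le> s)"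
    if a: "a > 0" and v: "vec2 0 a \<in> L \<or> vec2 0 (-a) \<in> L" for a
  proof -
    have va: "vec2 0 a \<in> L"
    proof (cases "vec2 0 a \<in> L")
      case False
      then have "vec2 0 (-a) \<in> L" using v by blast
      then have "- vec2 0 (-a) \<in> L" using L_neg L_def by blast
      then show ?thesis by (simp add: vec2_neg)
    qed simp
    have "lambda_q q * a^2 > 0" using a lp by simp
    moreover have "mat_image (h_mat (lambda_q q * a^2)) L = L"
      unfolding L_def by (rule hstab[OF q A _ va[unfolded L_def]]) (use a in simp)
    moreover have "lambda_q q * a^2 \<le> s" if "s > 0" "mat_image (h_mat s) L = L" for s
      using minimal[OF q A a va[unfolded L_def] that(1) that(2)[unfolded L_def]] .
    ultimately show ?thesis by (simp add: Let_def)
  qed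
  have C1: "(\<exists>y. y \<noteq> 0 \<and> vec2 0 y \<in> L) \<longleftrightarrow> (\<exists>s0>0. mat_image (h_mat s0) L = L)"
    using VH HS SV by meson
  have C2: "(\<exists>s0>0. mat_image (h_mat s0) L = L) \<longleftrightarrow> (\<exists>\<tau>0>0. L \<inter> strip \<tau>0 = {})"
    using VH HS SV by meson
  have C3: "\<forall>a>0. (vec2 0 a \<in> L \<or> vec2 0 (-a) \<in> L) \<longrightarrow> (let P = {s0. s0 > 0 \<and> mat_image (h_mat s0) L = L}
                 in lambda_q q * a^2 \<in> P \<and> (\<forall>s\<in>P. lambda_q q * a^2 \<le> s))"
    using P3 by blast
  show ?thesis unfolding L_def[symmetric] using C1 C2 C3 by (intro conjI)
qed

end
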